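(* Let $T$ be a tree (without loops) and $e=uv$ an edge of $T$. Then $\nu_2(T)-\nu_2(T\setminus e)\in\{0,1\}$; moreover $\nu_2(T)-\nu_2(T\setminus e)=0$ if and only if $u$ or $v$ is saturated in $T\setminus e$, and $\nu_2(T)-\nu_2(T\setminus e)=1$ if and only if $e$ is saturated in $T$.
   Context: A $2$-matching of a graph $G$ is a set of edges such that every vertex is incident to at most two of them; $\nu_2(G)$ is the maximum size of a $2$-matching and a $2$-matching of that size is called maximum. A vertex $w$ is saturated in $G$ if every maximum $2$-matching of $G$ has exactly two edges incident to $w$; an edge is saturated in $G$ if it belongs to every maximum $2$-matching of $G$. $T\setminus e$ denotes $T$ with the edge $e$ deleted (a forest). *)

theory Defs
  imports Main
begin

definition is_graph :: "'a set \<Rightarrow> 'a set set \<Rightarrow> bool" where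
  "is_graph V E \<longleftrightarrow> finite V \<and> (\<forall>e\<in>E. \<exists>x y. x \<noteq> y \<and> x \<in> V \<and> y \<in> V \<and> e = {x, y})"

definition adj :: "'a set set \<Rightarrow> 'a \<Rightarrow> 'a \<Rightarrow> bool" where
  "adj E x y \<longleftrightarrow> {x, y} \<in> E"

definition connected_graph :: "'a set \<Rightarrow> 'a set set \<Rightarrow> bool" where
  "connected_graph V E \<longleftrightarrow> (\<forall>x\<in>V. \<forall>y\<in>V. (adj E)\<^sup>*\<^sup>* x y)"

definition is_cycle :: "'a set \<Rightarrow> 'a set set \<Rightarrow> 'a list \<Rightarrow> bool" where
  "is_cycle V E cs \<longleftrightarrow> length cs \<ge> 3 \<and> distinct cs \<and> set cs \<subseteq> V \<and>
     (\<forall>i. Suc i < length cs \<longrightarrow> adj E (cs ! i) (cs ! Suc i)) \<and>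
     adj E (last cs) (hd cs)"

definition acyclic_graph :: "'a set \<Rightarrow> 'a set set \<Rightarrow> bool" where
  "acyclic_graph V E \<longleftrightarrow> \<not> (\<exists>cs. is_cycle V E cs)"

definition is_tree :: "'a set \<Rightarrow> 'a set set \<Rightarrow> bool" where
  "is_tree V E \<longleftrightarrow> is_graph V E \<and> V \<noteq> {} \<and> connected_graph V E \<and> acyclic_graph V E"

definition two_matching :: "'a set set \<Rightarrow> 'a set set \<Rightarrow> bool" where
  "two_matching E M \<longleftrightarrow> M \<subseteq> E \<and> (\<forall>w. card {e \<in> M. w \<in> e} \<le> 2)"

definition nu2 :: "'a set set \<Rightarrow> nat" where
  "nu2 E = Max {card M | M. two_matching E M}"

definition max_two_matching :: "'a set set \<Rightarrow> 'a set set \<Rightarrow> bool" where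
  "max_two_matching E M \<longleftrightarrow> two_matching E M \<and> card M = nu2 E"

definition saturated_vertex :: "'a set set \<Rightarrow> 'a \<Rightarrow> bool" where
  "saturated_vertex E w \<longleftrightarrow> (\<forall>M. max_two_matching E M \<longrightarrow> card {e \<in> M. w \<in> e} = 2)"

definition saturated_edge :: "'a set set \<Rightarrow> 'a set \<Rightarrow> bool" where
  "saturated_edge E f \<longleftrightarrow> (\<forall>M. max_two_matching E M \<longrightarrow> f \<in> M)"

end

theory Submission
  imports Defs
begin

abbreviation deg :: "'a set set \<Rightarrow> 'a \<Rightarrow> nat" where
  "deg M w \<equiv> card {f\<in>M. w\<in>f}"

lemma tm_finite: "finite E \<Longrightarrow> two_matching E M \<Longrightarrow> finite M"
  unfolding two_matching_def using finite_subset by blast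

lemma tm_le_nu2:
  assumes "finite E" "two_matching E M" shows "card M \<le> nu2 E"
proof -
  have fin: "finite {card M | M. two_matching E M}"
  proof (rule finite_subset[of _ "{..card E}"])
    show "{card M | M. two_matching E M} \<subseteq> {..card E}"
      using assms(1) by (auto simp: two_matching_def intro: card_mono)
  qed auto
  show ?thesis unfolding nu2_def using fin assms(2) by (auto intro: Max_ge)
qed

lemma max_exists:
  assumes "finite E" shows "\<exists>M. max_two_matching E M"
proof -
  have fin: "finite {card M | M. two_matching E M}"
  proof (rule finite_subset[of _ "{..card E}"])
    show "{card M | M. two_matching E M} \<subseteq> {..card E}"
      using assms(1) by (auto simp: two_matching_def intro: card_mono)
  qed auto
  have ne: "{card M | M. two_matching E M} \<noteq> {}"
    by (rule ccontr) (auto simp: two_matching_def)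
  have "nu2 E \<in> {card M | M. two_matching E M}"
    unfolding nu2_def using Max_in[OF fin ne] .
  then show ?thesis unfolding max_two_matching_def by auto
qed

lemma tm_mono: "E' \<subseteq> E \<Longrightarrow> two_matching E' M \<Longrightarrow> two_matching E M"
  unfolding two_matching_def by auto

lemma tm_remove:
  assumes "finite E" "two_matching E M" shows "two_matching (E - {e}) (M - {e})"
proof -
  have fin: "finite M" using tm_finite[OF assms] .
  have "M - {e} \<subseteq> E - {e}" using assms(2) by (auto simp: two_matching_def)
  moreover have "deg (M - {e}) w \<le> 2" for w
  proof -
    have "deg (M - {e}) w \<le> deg M w" using fin by (intro card_mono) auto
    moreover have "deg M w \<le> 2" using assms(2) unfolding two_matching_def by blast
    ultimately show ?thesis by linarith
  qed
  ultimately show ?thesis unfolding two_matching_def by blast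
qed

lemma tm_add:
  assumes "finite E" "two_matching (E - {{u,v}}) M" "{u,v} \<in> E"
    "deg M u < 2" "deg M v < 2"
  shows "two_matching E (insert {u,v} M)"
proof -
  have finM: "finite M" using assms(1,2) tm_finite by blast
  have sub: "insert {u,v} M \<subseteq> E" using assms(2,3) by (auto simp: two_matching_def)
  have "deg (insert {u,v} M) w \<le> 2" for w
  proof (cases "w \<in> {u,v}")
    case True
    have "{f \<in> insert {u,v} M. w \<in> f} = insert {u,v} {f\<in>M. w\<in>f}" using True by auto
    then have "deg (insert {u,v} M) w \<le> Suc (deg M w)"
      using finM by (simp add: card_insert_le_m1 card_insert_if)
    then show ?thesis using True assms(4,5) by auto
  next
    case False
    have "{f \<in> insert {u,v} M. w \<in> f} = {f\<in>M. w\<in>f}" using False by auto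
    then show ?thesis using assms(2) by (simp add: two_matching_def)
  qed
  then show ?thesis using sub unfolding two_matching_def by auto
qed

lemma path_exists:
  assumes "(adj F)\<^sup>*\<^sup>* u z"
  shows "\<exists>p. p \<noteq> [] \<and> hd p = u \<and> last p = z \<and> distinct p \<and> set p \<subseteq> insert u (\<Union>F)
     \<and> (\<forall>i. Suc i < length p \<longrightarrow> adj F (p!i) (p!Suc i))"
  using assms
proof (induction rule: rtranclp_induct)
  case base
  then show ?case by (intro exI[of _ "[u]"]) auto
next
  case (step y z)
  then obtain p where p: "p \<noteq> []" "hd p = u" "last p = y" "distinct p" "set p \<subseteq> insert u (\<Union>F)"
    "\<forall>i. Suc i < length p \<longrightarrow> adj F (p!i) (p!Suc i)" by blast
  have zF: "z \<in> \<Union>F" using step(2) by (auto simp: adj_def)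
  show ?case
  proof (cases "z \<in> set p")
    case True
    then obtain k where k: "k < length p" "p!k = z" by (auto simp: in_set_conv_nth)
    let ?q = "take (Suc k) p"
    have "?q \<noteq> []" using p(1) by simp
    moreover have "hd ?q = u" using p(1,2) by (simp add: hd_take)
    moreover have "last ?q = z" using k
      by (simp add: take_Suc_conv_app_nth)
    moreover have "distinct ?q" using p(4) by simp
    moreover have "set ?q \<subseteq> insert u (\<Union>F)" using p(5) set_take_subset by fastforce
    moreover have "\<forall>i. Suc i < length ?q \<longrightarrow> adj F (?q!i) (?q!Suc i)" using p(6) by auto
    ultimately show ?thesis by blast
  next
    case False
    let ?q = "p @ [z]"
    have "hd ?q = u" using p by simp
    moreover have "distinct ?q" using p(4) False by simp
    moreover have "set ?q \<subseteq> insert u (\<Union>F)" using p(5) zF by auto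
    moreover have "\<forall>i. Suc i < length ?q \<longrightarrow> adj F (?q!i) (?q!Suc i)"
    proof (intro allI impI)
      fix i assume i: "Suc i < length ?q"
      show "adj F (?q!i) (?q!Suc i)"
      proof (cases "Suc i < length p")
        case True
        then show ?thesis using p(6) by (simp add: nth_append)
      next
        case False
        then have "Suc i = length p" using i by simp
        moreover have "p ! i = y" using p(1,3) \<open>Suc i = length p\<close> by (metis diff_Suc_1 last_conv_nth)
        ultimately show ?thesis using step(2) by (simp add: nth_append)
      qed
    qed
    ultimately show ?thesis by (intro exI[of _ ?q]) simp
  qed
qed

lemma tree_sep:
  assumes "is_tree V E" "{u,v} \<in> E"
  shows "\<not> (adj (E - {{u,v}}))\<^sup>*\<^sup>* u v"
proof
  assume r: "(adj (E - {{u,v}}))\<^sup>*\<^sup>* u v"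
  let ?F = "E - {{u,v}}"
  from path_exists[OF r] obtain p where p: "p \<noteq> []" "hd p = u" "last p = v" "distinct p"
    "set p \<subseteq> insert u (\<Union>?F)" "\<forall>i. Suc i < length p \<longrightarrow> adj ?F (p!i) (p!Suc i)" by blast
  have g: "is_graph V E" using assms(1) by (simp add: is_tree_def)
  have gE: "\<forall>e\<in>E. \<exists>x y. x \<noteq> y \<and> x \<in> V \<and> y \<in> V \<and> e = {x, y}"
    using g unfolding is_graph_def by (rule conjunct2)
  obtain x y where xy: "x \<noteq> y" "x \<in> V" "y \<in> V" "{u,v} = {x,y}"
    using gE assms(2) by blast
  have uv: "u \<noteq> v" "u \<in> V" using xy by (auto simp: doubleton_eq_iff)
  have EV: "\<Union>E \<subseteq> V"
  proof
    fix z assume "z \<in> \<Union>E"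
    then obtain e where "e \<in> E" "z \<in> e" by blast
    then obtain a b where "a \<in> V" "b \<in> V" "e = {a,b}" using gE by blast
    then show "z \<in> V" using \<open>z \<in> e\<close> by auto
  qed
  have setp: "set p \<subseteq> V" using p(5) uv(2) EV by blast
  have l2: "length p \<ge> 2"
  proof (rule ccontr)
    assume "\<not> length p \<ge> 2"
    moreover have "length p \<noteq> 0" using p(1) by simp
    ultimately have "length p = 1" by linarith
    then obtain a where "p = [a]" by (auto simp: length_Suc_conv)
    then have "hd p = last p" by simp
    then show False using p uv by simp
  qed
  have l3: "length p \<ge> 3"
  proof (rule ccontr)
    assume "\<not> length p \<ge> 3"
    then have lp: "length p = 2" using l2 by simp
    have "adj ?F (p!0) (p!Suc 0)" using p(6) lp by simp
    moreover have "p!0 = u" using p(1,2) by (simp add: hd_conv_nth)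
    moreover have "p!Suc 0 = v" using p(1,3) lp by (simp add: last_conv_nth)
    ultimately show False by (simp add: adj_def)
  qed
  have a1: "\<forall>i. Suc i < length p \<longrightarrow> adj E (p!i) (p!Suc i)"
    using p(6) unfolding adj_def by blast
  have a2: "adj E (last p) (hd p)" using p(2,3) assms(2) unfolding adj_def by (simp add: insert_commute)
  have "is_cycle V E p"
    unfolding is_cycle_def using l3 p(4) setp a1 a2 by blast
  then show False using assms(1) by (auto simp: is_tree_def acyclic_graph_def)
qed

lemma comb:
  assumes "two_matching F M1" "two_matching F M2" "\<forall>f\<in>F. f \<subseteq> C \<or> f \<inter> C = {}"
  defines "N \<equiv> {f\<in>M1. f \<subseteq> C} \<union> {f\<in>M2. \<not> f \<subseteq> C}"
  shows "two_matching F N" "\<forall>w\<in>C. deg N w = deg M1 w" "\<forall>w. w \<notin> C \<longrightarrow> deg N w = deg M2 w"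
proof -
  have M1F: "M1 \<subseteq> F" and M2F: "M2 \<subseteq> F" using assms(1,2) by (auto simp: two_matching_def)
  have d1: "{f\<in>N. w\<in>f} = {f\<in>M1. w\<in>f}" if w: "w \<in> C" for w
  proof (rule set_eqI)
    fix f
    show "f \<in> {f\<in>N. w\<in>f} \<longleftrightarrow> f \<in> {f\<in>M1. w\<in>f}"
    proof
      assume "f \<in> {f\<in>N. w\<in>f}"
      then have wf: "w \<in> f" and fN: "f \<in> N" by auto
      show "f \<in> {f\<in>M1. w\<in>f}"
      proof (cases "f \<in> M1 \<and> f \<subseteq> C")
        case True then show ?thesis using wf by simp
      next
        case False
        then have "f \<in> M2" "\<not> f \<subseteq> C" using fN unfolding N_def by auto
        moreover have "f \<in> F" using \<open>f \<in> M2\<close> M2F by auto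
        ultimately have "f \<inter> C = {}" using assms(3) by auto
        then show ?thesis using wf w by auto
      qed
    next
      assume "f \<in> {f\<in>M1. w\<in>f}"
      then have wf: "w \<in> f" and fM: "f \<in> M1" by auto
      have "f \<in> F" using fM M1F by auto
      then have "f \<subseteq> C \<or> f \<inter> C = {}" using assms(3) by auto
      then have "f \<subseteq> C" using wf w by auto
      then show "f \<in> {f\<in>N. w\<in>f}" using fM wf unfolding N_def by auto
    qed
  qed
  have d2: "{f\<in>N. w\<in>f} = {f\<in>M2. w\<in>f}" if w: "w \<notin> C" for w
  proof (rule set_eqI)
    fix f
    show "f \<in> {f\<in>N. w\<in>f} \<longleftrightarrow> f \<in> {f\<in>M2. w\<in>f}"
      unfolding N_def using w by auto
  qed
  show "\<forall>w\<in>C. deg N w = deg M1 w" using d1 by simp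
  show "\<forall>w. w \<notin> C \<longrightarrow> deg N w = deg M2 w" using d2 by simp
  have sub: "N \<subseteq> F" using M1F M2F unfolding N_def by auto
  have "deg N w \<le> 2" for w
  proof (cases "w \<in> C")
    case True
    then have "deg N w = deg M1 w" using d1 by simp
    moreover have "deg M1 w \<le> 2" using assms(1) unfolding two_matching_def by blast
    ultimately show ?thesis by simp
  next
    case False
    then have "deg N w = deg M2 w" using d2 by simp
    moreover have "deg M2 w \<le> 2" using assms(2) unfolding two_matching_def by blast
    ultimately show ?thesis by simp
  qed
  then show "two_matching F N" using sub unfolding two_matching_def by blast
qed

theorem lemma2p4:
  fixes V :: "'a set" and E :: "'a set set" and u v :: 'a
  assumes "is_tree V E" and "{u, v} \<in> E"
  shows "int (nu2 E) - int (nu2 (E - {{u, v}})) \<in> {0, 1}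
    \<and> (int (nu2 E) - int (nu2 (E - {{u, v}})) = 0 \<longleftrightarrow>
         saturated_vertex (E - {{u, v}}) u \<or> saturated_vertex (E - {{u, v}}) v)
    \<and> (int (nu2 E) - int (nu2 (E - {{u, v}})) = 1 \<longleftrightarrow> saturated_edge E {u, v})"
proof -
  define E' where "E' = E - {{u,v}}"
  have g: "is_graph V E" using assms(1) by (simp add: is_tree_def)
  have finE: "finite E"
  proof -
    have gE: "\<forall>e\<in>E. \<exists>x y. x \<noteq> y \<and> x \<in> V \<and> y \<in> V \<and> e = {x, y}"
      using g unfolding is_graph_def by (rule conjunct2)
    have "E \<subseteq> Pow V"
    proof
      fix e assume "e \<in> E"
      then obtain a b where "a \<in> V" "b \<in> V" "e = {a,b}" using gE by blast
      then show "e \<in> Pow V" by auto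
    qed
    moreover have "finite V" using g unfolding is_graph_def by (rule conjunct1)
    ultimately show ?thesis using finite_subset by blast
  qed
  have finE': "finite E'" using finE by (simp add: E'_def)
  obtain M0 where M0: "max_two_matching E' M0" using max_exists[OF finE'] by blast
  obtain K0 where K0: "max_two_matching E K0" using max_exists[OF finE] by blast
  have le1: "nu2 E' \<le> nu2 E"
  proof -
    have "E' \<subseteq> E" by (auto simp: E'_def)
    then have "two_matching E M0" using M0 tm_mono[of E' E] by (simp add: max_two_matching_def)
    then have "card M0 \<le> nu2 E" using tm_le_nu2[OF finE] by blast
    moreover have "card M0 = nu2 E'" using M0 by (simp add: max_two_matching_def)
    ultimately show ?thesis by simp
  qed
  have finK: "finite K0" using tm_finite[OF finE] K0 by (simp add: max_two_matching_def)
  have le2: "nu2 E \<le> nu2 E' + 1"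
  proof -
    have "two_matching E K0" using K0 by (simp add: max_two_matching_def)
    then have tm: "two_matching E' (K0 - {{u,v}})" unfolding E'_def by (rule tm_remove[OF finE])
    have "card K0 \<le> card (K0 - {{u,v}}) + 1"
      using finK by (simp add: card_Diff_singleton_if) linarith
    moreover have "card (K0 - {{u,v}}) \<le> nu2 E'" using tm_le_nu2[OF finE' tm] .
    moreover have "card K0 = nu2 E" using K0 by (simp add: max_two_matching_def)
    ultimately show ?thesis by simp
  qed
  have degle: "\<And>F M w. two_matching F M \<Longrightarrow> deg M w \<le> 2" by (simp add: two_matching_def)
  have A: "nu2 E = nu2 E' + 1 \<Longrightarrow> saturated_edge E {u,v} \<and> \<not> saturated_vertex E' u \<and> \<not> saturated_vertex E' v"
  proof -
    assume eq: "nu2 E = nu2 E' + 1"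
    have inM: "{u,v} \<in> M" if "max_two_matching E M" for M
    proof (rule ccontr)
      assume "{u,v} \<notin> M"
      moreover have "two_matching E M" using that by (simp add: max_two_matching_def)
      ultimately have "two_matching E' M" unfolding two_matching_def E'_def by blast
      then have "card M \<le> nu2 E'" using tm_le_nu2[OF finE'] by blast
      then show False using that eq by (simp add: max_two_matching_def)
    qed
    have ek: "{u,v} \<in> K0" using inM K0 by blast
    have tK0: "two_matching E K0" using K0 by (simp add: max_two_matching_def)
    then have tm: "two_matching E' (K0 - {{u,v}})" unfolding E'_def by (rule tm_remove[OF finE])
    have "card (K0 - {{u,v}}) = nu2 E'" using ek finK K0 eq by (simp add: max_two_matching_def)
    then have mx: "max_two_matching E' (K0 - {{u,v}})" using tm by (simp add: max_two_matching_def)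
    have dd: "deg (K0 - {{u,v}}) w < 2" if "w \<in> {u,v}" for w
    proof -
      have s: "{f \<in> K0 - {{u,v}}. w \<in> f} = {f\<in>K0. w\<in>f} - {{u,v}}" by auto
      have "{u,v} \<in> {f\<in>K0. w\<in>f}" using ek that by auto
      moreover have "finite {f\<in>K0. w\<in>f}" using finK by simp
      moreover have "deg K0 w \<le> 2" using degle[OF tK0] .
      ultimately show ?thesis unfolding s by (simp add: card_Diff_singleton)
    qed
    have "\<not> saturated_vertex E' u"
    proof
      assume "saturated_vertex E' u"
      then have "deg (K0 - {{u,v}}) u = 2" using mx unfolding saturated_vertex_def by blast
      then show False using dd[of u] by simp
    qed
    moreover have "\<not> saturated_vertex E' v"
    proof
      assume "saturated_vertex E' v"
      then have "deg (K0 - {{u,v}}) v = 2" using mx unfolding saturated_vertex_def by blast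
      then show False using dd[of v] by simp
    qed
    moreover have "saturated_edge E {u,v}" using inM unfolding saturated_edge_def by blast
    ultimately show ?thesis by blast
  qed
  have B: "nu2 E = nu2 E' \<Longrightarrow> \<not> saturated_edge E {u,v} \<and> (saturated_vertex E' u \<or> saturated_vertex E' v)"
  proof -
    assume eq: "nu2 E = nu2 E'"
    have "E' \<subseteq> E" by (auto simp: E'_def)
    then have "two_matching E M0" using M0 tm_mono[of E' E] by (simp add: max_two_matching_def)
    moreover have "card M0 = nu2 E" using M0 eq by (simp add: max_two_matching_def)
    ultimately have "max_two_matching E M0" by (simp add: max_two_matching_def)
    moreover have "{u,v} \<notin> M0" using M0 unfolding max_two_matching_def two_matching_def E'_def by blast
    ultimately have ns: "\<not> saturated_edge E {u,v}" by (auto simp: saturated_edge_def)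
    have "saturated_vertex E' u \<or> saturated_vertex E' v"
    proof (rule ccontr)
      assume "\<not> (saturated_vertex E' u \<or> saturated_vertex E' v)"
      then have nu: "\<not> saturated_vertex E' u" and nv: "\<not> saturated_vertex E' v" by auto
      from nu obtain M1 where M1: "max_two_matching E' M1" "deg M1 u \<noteq> 2"
        unfolding saturated_vertex_def by auto
      from nv obtain M2 where M2: "max_two_matching E' M2" "deg M2 v \<noteq> 2"
        unfolding saturated_vertex_def by auto
      have t1: "two_matching E' M1" and t2: "two_matching E' M2"
        using M1(1) M2(1) by (simp_all add: max_two_matching_def)
      define C where "C = {w. (adj E')\<^sup>*\<^sup>* u w}"
      have uC: "u \<in> C" by (simp add: C_def)
      have vC: "v \<notin> C" using tree_sep[OF assms] by (simp add: C_def E'_def)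
      have cl: "\<forall>f\<in>E'. f \<subseteq> C \<or> f \<inter> C = {}"
      proof
        fix f assume f: "f \<in> E'"
        have gE: "\<forall>e\<in>E. \<exists>x y. x \<noteq> y \<and> x \<in> V \<and> y \<in> V \<and> e = {x, y}"
          using g unfolding is_graph_def by (rule conjunct2)
        have "f \<in> E" using f by (simp add: E'_def)
        then obtain x y where "f = {x,y}" using gE by blast
        moreover have "adj E' x y" "adj E' y x" using f calculation by (auto simp: adj_def insert_commute)
        moreover have "x \<in> C \<longleftrightarrow> y \<in> C" unfolding C_def
          using calculation(2,3) rtranclp.rtrancl_into_rtrancl[of "adj E'" u x y]
            rtranclp.rtrancl_into_rtrancl[of "adj E'" u y x] by blast
        ultimately show "f \<subseteq> C \<or> f \<inter> C = {}" by auto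
      qed
      define N where "N = {f\<in>M1. f \<subseteq> C} \<union> {f\<in>M2. \<not> f \<subseteq> C}"
      define N' where "N' = {f\<in>M2. f \<subseteq> C} \<union> {f\<in>M1. \<not> f \<subseteq> C}"
      note cN = comb[OF t1 t2 cl, folded N_def]
      note cN' = comb[OF t2 t1 cl, folded N'_def]
      have f1: "finite M1" "finite M2" using t1 t2 tm_finite[OF finE'] by auto
      have "card N = card {f\<in>M1. f \<subseteq> C} + card {f\<in>M2. \<not> f \<subseteq> C}"
        unfolding N_def using f1 by (intro card_Un_disjoint) auto
      moreover have "card N' = card {f\<in>M2. f \<subseteq> C} + card {f\<in>M1. \<not> f \<subseteq> C}"
        unfolding N'_def using f1 by (intro card_Un_disjoint) auto
      moreover have "card M1 = card {f\<in>M1. f \<subseteq> C} + card {f\<in>M1. \<not> f \<subseteq> C}"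
      proof -
        have "M1 = {f\<in>M1. f \<subseteq> C} \<union> {f\<in>M1. \<not> f \<subseteq> C}" by blast
        then have "card M1 = card ({f\<in>M1. f \<subseteq> C} \<union> {f\<in>M1. \<not> f \<subseteq> C})" by simp
        also have "\<dots> = card {f\<in>M1. f \<subseteq> C} + card {f\<in>M1. \<not> f \<subseteq> C}"
          using f1 by (intro card_Un_disjoint) auto
        finally show ?thesis .
      qed
      moreover have "card M2 = card {f\<in>M2. f \<subseteq> C} + card {f\<in>M2. \<not> f \<subseteq> C}"
      proof -
        have "M2 = {f\<in>M2. f \<subseteq> C} \<union> {f\<in>M2. \<not> f \<subseteq> C}" by blast
        then have "card M2 = card ({f\<in>M2. f \<subseteq> C} \<union> {f\<in>M2. \<not> f \<subseteq> C})" by simp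
        also have "\<dots> = card {f\<in>M2. f \<subseteq> C} + card {f\<in>M2. \<not> f \<subseteq> C}"
          using f1 by (intro card_Un_disjoint) auto
        finally show ?thesis .
      qed
      moreover have "card N \<le> nu2 E'" "card N' \<le> nu2 E'"
        using cN(1) cN'(1) tm_le_nu2[OF finE'] by auto
      moreover have "card M1 = nu2 E'" "card M2 = nu2 E'" using M1(1) M2(1) by (simp_all add: max_two_matching_def)
      ultimately have cardN: "card N = nu2 E'" by linarith
      have du: "deg N u < 2" using cN(2) uC M1(2) degle[OF t1, of u] by auto
      have dv: "deg N v < 2" using cN(3) vC M2(2) degle[OF t2, of v] by auto
      have tmN: "two_matching (E - {{u,v}}) N" using cN(1) by (simp add: E'_def)
      have ins: "two_matching E (insert {u,v} N)" using tm_add[OF finE tmN assms(2) du dv] .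
      have "{u,v} \<notin> N" using tmN by (auto simp: two_matching_def)
      moreover have "finite N" using tm_finite[OF finE' cN(1)] .
      ultimately have "card (insert {u,v} N) = nu2 E' + 1" using cardN by simp
      then show False using tm_le_nu2[OF finE ins] eq by simp
    qed
    then show ?thesis using ns by blast
  qed
  have "nu2 E = nu2 E' \<or> nu2 E = nu2 E' + 1" using le1 le2 by linarith
  then show ?thesis
  proof
    assume eq: "nu2 E = nu2 E'"
    then show ?thesis using B unfolding E'_def[symmetric] by simp
  next
    assume eq: "nu2 E = nu2 E' + 1"
    then show ?thesis using A unfolding E'_def[symmetric] by simp
  qed
qed

end
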